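(* Let $n\ge 1$ and let $X_1,\dots,X_n$ be non-negative random variables defined on a common probability space, where for each $i\in[n]=\{1,\dots,n\}$ the variable $X_i$ has a continuous distribution function $F_i$. No assumption is made about the joint distribution of $(X_1,\dots,X_n)$ (in particular, independence is not assumed). Let $s>0$ and suppose $t(n,s)>0$ satisfies $$ s=\sum_{i=1}^n \int_0^{t(n,s)} x\, dF_i(x). $$ Then $$ \mathbb{E}\Big[\max\Big\{|A| : A\subset[n],\ \sum_{i\in A} X_i\le s\Big\}\Big]\le \sum_{i=1}^n F_i(t(n,s)). $$
   Context: $|A|$ denotes the cardinality of $A$; the empty set is allowed in the maximum, so the maximum is well defined. *)

theory Defs
  imports "HOL-Probability.Probability"
begin

end

theory Submission
  imports Defs
begin

theorem theorem1:
  fixes M :: "'a measure" and X :: "nat \<Rightarrow> 'a \<Rightarrow> real"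
    and n :: nat and s t :: real
  assumes "prob_space M"
    and "n \<ge> 1"
    and rv: "\<And>i. i \<in> {1..n} \<Longrightarrow> X i \<in> borel_measurable M"
    and nonneg: "\<And>i \<omega>. i \<in> {1..n} \<Longrightarrow> \<omega> \<in> space M \<Longrightarrow> X i \<omega> \<ge> 0"
    and cont: "\<And>i. i \<in> {1..n} \<Longrightarrow> continuous_on UNIV (cdf (distr M borel (X i)))"
    and "s > 0" and "t > 0"
    and t_def: "s = (\<Sum>i=1..n. (LINT x:{0..t}|distr M borel (X i). x))"
  shows "(\<integral>\<omega>. real (Max {card A | A. A \<subseteq> {1..n} \<and> (\<Sum>i\<in>A. X i \<omega>) \<le> s}) \<partial>M)
           \<le> (\<Sum>i=1..n. cdf (distr M borel (X i)) t)"
proof -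
  interpret prob_space M by fact
  define h where "h x = indicator {..t} x - indicator {0..t} x * x / t" for x :: real
  define N where "N \<omega> = real (Max {card A | A. A \<subseteq> {1..n} \<and> (\<Sum>i\<in>A. X i \<omega>) \<le> s})" for \<omega>
  define g where "g \<omega> = s / t + (\<Sum>i=1..n. h (X i \<omega>))" for \<omega>
  have hmeas: "h \<in> borel_measurable borel" unfolding h_def by measurable
  have hbound: "norm (h x) \<le> 2" for x
    using \<open>t > 0\<close> by (auto simp: h_def indicator_def field_simps)
  have hnn: "x \<ge> 0 \<Longrightarrow> h x \<ge> 0" for x
    using \<open>t > 0\<close> by (auto simp: h_def indicator_def field_simps)
  have hint: "integrable M (\<lambda>\<omega>. h (X i \<omega>))" if "i \<in> {1..n}" for i
    by (rule integrable_const_bound[where B=2]) (use hbound rv[OF that] hmeas in auto)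
  have hval: "integral\<^sup>L M (\<lambda>\<omega>. h (X i \<omega>)) = cdf (distr M borel (X i)) t
      - (LINT x:{0..t}|distr M borel (X i). x) / t" if i: "i \<in> {1..n}" for i
  proof -
    let ?D = "distr M borel (X i)"
    interpret D: prob_space ?D using rv[OF i] by (simp add: prob_space_distr)
    have "integral\<^sup>L M (\<lambda>\<omega>. h (X i \<omega>)) = integral\<^sup>L ?D h"
      using rv[OF i] hmeas by (simp add: integral_distr)
    also have "\<dots> = integral\<^sup>L ?D (indicator {..t}) - integral\<^sup>L ?D (\<lambda>x. indicator {0..t} x * x / t)"
    proof -
      have i1: "integrable ?D (indicator {..t} :: real \<Rightarrow> real)"
        by (rule D.integrable_const_bound[where B=1]) (auto simp: indicator_def)
      have i2: "integrable ?D (\<lambda>x. indicator {0..t} x * x / t)"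
        by (rule D.integrable_const_bound[where B=1]) (use \<open>t>0\<close> in \<open>auto simp: indicator_def field_simps\<close>)
      show ?thesis unfolding h_def by (rule Bochner_Integration.integral_diff[OF i1 i2])
    qed
    also have "integral\<^sup>L ?D (indicator {..t}) = cdf ?D t"
      by (simp add: cdf_def)
    also have "integral\<^sup>L ?D (\<lambda>x. indicator {0..t} x * x / t) = (LINT x:{0..t}|?D. x) / t"
      by (simp add: set_lebesgue_integral_def)
    finally show ?thesis .
  qed
  have gint: "integrable M g" unfolding g_def
    by (intro Bochner_Integration.integrable_add integrable_const Bochner_Integration.integrable_sum) (use hint in auto)
  have gval: "integral\<^sup>L M g = (\<Sum>i=1..n. cdf (distr M borel (X i)) t)"
  proof -
    have "integral\<^sup>L M g = s / t + (\<Sum>i=1..n. integral\<^sup>L M (\<lambda>\<omega>. h (X i \<omega>)))"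
      unfolding g_def
      by (subst Bochner_Integration.integral_add)
         (use hint in \<open>auto intro!: Bochner_Integration.integrable_sum simp: Bochner_Integration.integral_sum prob_space\<close>)
    also have "\<dots> = s / t + (\<Sum>i=1..n. cdf (distr M borel (X i)) t)
        - (\<Sum>i=1..n. (LINT x:{0..t}|distr M borel (X i). x)) / t"
      using hval by (simp add: sum_subtractf sum_divide_distrib)
    finally show ?thesis using t_def by simp
  qed
  have pw: "N \<omega> \<le> g \<omega>" if w: "\<omega> \<in> space M" for \<omega>
  proof -
    have fin: "finite {card A | A. A \<subseteq> {1..n} \<and> (\<Sum>i\<in>A. X i \<omega>) \<le> s}"
      by (rule finite_surj[where f=card and A="Pow {1..n}"]) auto
    have ne: "{card A | A. A \<subseteq> {1..n} \<and> (\<Sum>i\<in>A. X i \<omega>) \<le> s} \<noteq> {}"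
      using \<open>s > 0\<close> by (auto intro!: exI[of _ "{}"])
    have "real (card A) \<le> g \<omega>" if A: "A \<subseteq> {1..n}" "(\<Sum>i\<in>A. X i \<omega>) \<le> s" for A
    proof -
      have finA: "finite A" using A finite_subset by blast
      have "real (card A) = (\<Sum>i\<in>A. 1)" by simp
      also have "\<dots> \<le> (\<Sum>i\<in>A. X i \<omega> / t + h (X i \<omega>))"
      proof (rule sum_mono)
        fix i assume "i \<in> A"
        show "1 \<le> X i \<omega> / t + h (X i \<omega>)"
          using \<open>t > 0\<close> nonneg[of i \<omega>] \<open>i \<in> A\<close> A w
          by (cases "X i \<omega> \<le> t") (auto simp: h_def indicator_def field_simps)
      qed
      also have "\<dots> = (\<Sum>i\<in>A. X i \<omega>) / t + (\<Sum>i\<in>A. h (X i \<omega>))"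
        by (simp add: sum.distrib sum_divide_distrib)
      also have "(\<Sum>i\<in>A. X i \<omega>) / t \<le> s / t"
        using A(2) \<open>t>0\<close> by (simp add: divide_right_mono)
      also have "(\<Sum>i\<in>A. h (X i \<omega>)) \<le> (\<Sum>i=1..n. h (X i \<omega>))"
        by (rule sum_mono2) (use A hnn nonneg w in auto)
      finally show ?thesis by (simp add: g_def)
    qed
    moreover have "Max {card A | A. A \<subseteq> {1..n} \<and> (\<Sum>i\<in>A. X i \<omega>) \<le> s}
        \<in> {card A | A. A \<subseteq> {1..n} \<and> (\<Sum>i\<in>A. X i \<omega>) \<le> s}"
      using fin ne by (rule Max_in)
    ultimately show ?thesis unfolding N_def by auto
  qed
  show ?thesis
  proof (cases "integrable M N")
    case True
    have "integral\<^sup>L M N \<le> integral\<^sup>L M g"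
      by (rule integral_mono[OF True gint pw])
    then show ?thesis using gval unfolding N_def[abs_def] by simp
  next
    case False
    have "0 \<le> (\<Sum>i=1..n. cdf (distr M borel (X i)) t)"
      by (rule sum_nonneg) (simp add: cdf_def)
    then show ?thesis using False unfolding N_def[abs_def] by (simp add: not_integrable_integral_eq)
  qed
qed

end
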